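(* Let $R$ be a commutative ring with identity and $S$ a multiplicative subset of $R$. Let $M$ and $N$ be $R$-modules and suppose $f:M\rightarrow N$ is a $u$-$S$-isomorphism. Then there exist a $u$-$S$-isomorphism $g:N\rightarrow M$ and an element $t\in S$ such that $f\circ g=t\,\mathrm{Id}_N$ and $g\circ f=t\,\mathrm{Id}_M$.
   Context: A multiplicative subset $S$ of $R$ satisfies $1\in S$ and $s_1s_2\in S$ for $s_1,s_2\in S$. An $R$-module $T$ is $u$-$S$-torsion (with respect to $s$) if there is $s\in S$ with $sT=0$. A sequence $A\xrightarrow{f}B\xrightarrow{g}C$ is $u$-$S$-exact at $B$ (with respect to $s\in S$) if $s\,\mathrm{Ker}(g)\subseteq \mathrm{Im}(f)$ and $s\,\mathrm{Im}(f)\subseteq\mathrm{Ker}(g)$. An $R$-homomorphism $f:M\to N$ is a $u$-$S$-isomorphism if $0\to M\xrightarrow{f}N\to 0$ is $u$-$S$-exact, i.e. there is $s\in S$ with $s\,\mathrm{Ker}(f)=0$ and $sN\subseteq \mathrm{Im}(f)$. *)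

theory Defs
  imports Complex_Main
begin

text \<open>Rings are types of class comm_ring_1; modules are abelian groups 'b with a
scalar multiplication scale, satisfying the module axioms (locale module from Main).\<close>

definition multiplicative_subset :: "'a::comm_ring_1 set \<Rightarrow> bool" where
  "multiplicative_subset S \<longleftrightarrow> 1 \<in> S \<and> (\<forall>s1\<in>S. \<forall>s2\<in>S. s1 * s2 \<in> S)"

definition u_S_isomorphism ::
  "'a::comm_ring_1 set \<Rightarrow> ('a \<Rightarrow> 'b::ab_group_add \<Rightarrow> 'b) \<Rightarrow> ('a \<Rightarrow> 'c::ab_group_add \<Rightarrow> 'c)
     \<Rightarrow> ('b \<Rightarrow> 'c) \<Rightarrow> bool" where
  "u_S_isomorphism S scaleM scaleN f \<longleftrightarrow>
     module_hom scaleM scaleN f \<and>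
     (\<exists>s\<in>S. (\<forall>x. f x = 0 \<longrightarrow> scaleM s x = 0) \<and> (\<forall>y. scaleN s y \<in> range f))"

end

theory Submission
  imports Defs
begin

theorem proposition1p1:
  fixes S :: "'a::comm_ring_1 set"
    and scaleM :: "'a \<Rightarrow> 'm::ab_group_add \<Rightarrow> 'm"
    and scaleN :: "'a \<Rightarrow> 'n::ab_group_add \<Rightarrow> 'n"
    and f :: "'m \<Rightarrow> 'n"
  assumes "multiplicative_subset S"
    and "module scaleM"
    and "module scaleN"
    and "u_S_isomorphism S scaleM scaleN f"
  shows "\<exists>g t. u_S_isomorphism S scaleN scaleM g \<and> t \<in> S \<and>
           (\<forall>y. f (g y) = scaleN t y) \<and> (\<forall>x. g (f x) = scaleM t x)"
proof -
  interpret M: module scaleM by fact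
  interpret N: module scaleN by fact
  have hom: "module_hom scaleM scaleN f" using assms(4) unfolding u_S_isomorphism_def by blast
  interpret F: module_hom scaleM scaleN f by (rule hom)
  obtain s where sS: "s \<in> S" and K: "\<And>x. f x = 0 \<Longrightarrow> scaleM s x = 0"
    and I: "\<And>y. scaleN s y \<in> range f"
    using assms(4) unfolding u_S_isomorphism_def by blast
  have ssS: "s * s \<in> S" using assms(1) sS unfolding multiplicative_subset_def by blast
  define h where "h y = (SOME x. f x = scaleN s y)" for y
  have hf: "f (h y) = scaleN s y" for y
  proof -
    from I[of y] obtain x where "scaleN s y = f x" by blast
    then show ?thesis unfolding h_def by (metis (mono_tags, lifting) someI)
  qed
  have key: "scaleM s x = scaleM s x'" if "f x = f x'" for x x'
  proof -
    have "f (x - x') = 0" using that F.diff by simp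
    then have "scaleM s (x - x') = 0" by (rule K)
    then show ?thesis by (simp add: M.scale_right_diff_distrib)
  qed
  define g where "g y = scaleM s (h y)" for y
  have gadd: "g (a + b) = g a + g b" for a b
  proof -
    have "f (h (a + b)) = f (h a + h b)" by (simp add: hf F.add N.scale_right_distrib)
    then have "scaleM s (h (a + b)) = scaleM s (h a + h b)" by (rule key)
    then show ?thesis unfolding g_def by (simp add: M.scale_right_distrib)
  qed
  have gscale: "g (scaleN r y) = scaleM r (g y)" for r y
  proof -
    have "f (h (scaleN r y)) = f (scaleM r (h y))" by (simp add: hf F.scale mult.commute)
    then have "scaleM s (h (scaleN r y)) = scaleM s (scaleM r (h y))" by (rule key)
    then show ?thesis unfolding g_def by (simp add: mult.commute)
  qed
  have fg: "f (g y) = scaleN (s * s) y" for y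
    unfolding g_def by (simp add: F.scale hf)
  have gf: "g (f x) = scaleM (s * s) x" for x
  proof -
    have "f (h (f x)) = f (scaleM s x)" by (simp add: hf F.scale)
    then have "scaleM s (h (f x)) = scaleM s (scaleM s x)" by (rule key)
    then show ?thesis unfolding g_def by simp
  qed
  have ghom: "module_hom scaleN scaleM g"
    by (simp add: module_hom_iff assms(2,3) gadd gscale)
  have "u_S_isomorphism S scaleN scaleM g"
    unfolding u_S_isomorphism_def
  proof (intro conjI ghom bexI[of _ "s * s"] allI impI ssS)
    fix y assume "g y = 0"
    then show "scaleN (s * s) y = 0" using fg[of y] by simp
  next
    fix x show "scaleM (s * s) x \<in> range g" using gf[of x] by (metis rangeI)
  qed
  then show ?thesis using ssS fg gf by blast
qed

end
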